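(* Let $g(n) = \frac{(\log n)^2}{n} f(n)$, let \[ L = \liminf_{k\to\infty} \frac{\log(R(k,k))}{k} \quad\text{and}\quad M = \limsup_{t\to\infty} \max_{1 \le s \le t} \frac{\log(R(s,t))}{\sqrt{st}}. \] Then \[ \liminf_{n\to\infty} g(n) \ge L^2 \quad\text{and}\quad \limsup_{n\to\infty} g(n) \ge M^2. \]
   Context: All logarithms are in base 2. For positive integers $s,t$, the Ramsey number $R(s,t)$ is the minimum $n$ such that every red/blue edge-coloring of the complete graph $K_n$ contains a red clique on $s$ vertices or a blue clique on $t$ vertices. For a graph $G$, $\chi(G)$ is its chromatic number and $\omega(G)$ its clique number. For $n \in \mathbb{N}$, $f(n)$ is the maximum of $\chi(G)/\omega(G)$ over all graphs $G$ on $n$ vertices. *)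

theory Defs
  imports Complex_Main "HOL-Library.Extended_Real" "HOL-Library.Liminf_Limsup"
begin

definition is_graph :: "nat \<Rightarrow> nat set set \<Rightarrow> bool" where
  "is_graph n E \<longleftrightarrow> (\<forall>e\<in>E. e \<subseteq> {..<n} \<and> card e = 2)"

definition chromatic_number :: "nat \<Rightarrow> nat set set \<Rightarrow> nat" where
  "chromatic_number n E = (LEAST k. \<exists>c::nat \<Rightarrow> nat.
      (\<forall>v<n. c v < k) \<and> (\<forall>u v. {u, v} \<in> E \<longrightarrow> c u \<noteq> c v))"

definition is_clique :: "nat set set \<Rightarrow> nat set \<Rightarrow> bool" where
  "is_clique E S \<longleftrightarrow> (\<forall>u\<in>S. \<forall>v\<in>S. u \<noteq> v \<longrightarrow> {u, v} \<in> E)"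

definition clique_number :: "nat \<Rightarrow> nat set set \<Rightarrow> nat" where
  "clique_number n E = Max {card S | S. S \<subseteq> {..<n} \<and> is_clique E S}"

definition f_ratio :: "nat \<Rightarrow> real" where
  "f_ratio n = Max {real (chromatic_number n E) / real (clique_number n E) | E. is_graph n E}"

definition g_fun :: "nat \<Rightarrow> real" where
  "g_fun n = (log 2 (real n))\<^sup>2 / real n * f_ratio n"

text \<open>Ramsey number R(s,t): colour True = red, False = blue, on the edges of K_n
  (vertex set {0..<n}).\<close>
definition ramsey :: "nat \<Rightarrow> nat \<Rightarrow> nat" where
  "ramsey s t = (LEAST n. \<forall>c :: nat set \<Rightarrow> bool.
      (\<exists>S\<subseteq>{..<n}. card S = s \<and> (\<forall>u\<in>S. \<forall>v\<in>S. u \<noteq> v \<longrightarrow> c {u, v})) \<or>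
      (\<exists>T\<subseteq>{..<n}. card T = t \<and> (\<forall>u\<in>T. \<forall>v\<in>T. u \<noteq> v \<longrightarrow> \<not> c {u, v})))"

definition L_const :: ereal where
  "L_const = liminf (\<lambda>k. ereal (log 2 (real (ramsey k k)) / real k))"

definition M_const :: ereal where
  "M_const = limsup (\<lambda>t. ereal (Max ((\<lambda>s. log 2 (real (ramsey s t)) / sqrt (real s * real t)) ` {1..t})))"

end

theory Submission
  imports Defs "HOL-Library.Ramsey"
begin


definition rP :: "nat \<Rightarrow> nat \<Rightarrow> nat \<Rightarrow> bool" where
  "rP s t n \<longleftrightarrow> (\<forall>c :: nat set \<Rightarrow> bool.
      (\<exists>S\<subseteq>{..<n}. card S = s \<and> (\<forall>u\<in>S. \<forall>v\<in>S. u \<noteq> v \<longrightarrow> c {u, v})) \<or>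
      (\<exists>T\<subseteq>{..<n}. card T = t \<and> (\<forall>u\<in>T. \<forall>v\<in>T. u \<noteq> v \<longrightarrow> \<not> c {u, v})))"

lemma ramsey_eq: "ramsey s t = (LEAST n. rP s t n)"
  unfolding ramsey_def rP_def ..

lemma rP_ex: "\<exists>n. rP s t n"
proof -
  obtain r where r: "\<forall>(V::nat set) (E::nat set set). finite V \<and> card V \<ge> r \<longrightarrow>
    (\<exists>R \<subseteq> V. card R = s \<and> clique R E \<or> card R = t \<and> indep R E)"
    using ramsey2[of s t] by blast
  have "rP s t r" unfolding rP_def
  proof
    fix c :: "nat set \<Rightarrow> bool"
    from r[rule_format, of "{..<r}" "{e. c e}"] obtain R where
      "R \<subseteq> {..<r}" "card R = s \<and> clique R {e. c e} \<or> card R = t \<and> indep R {e. c e}" by auto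
    then show "(\<exists>S\<subseteq>{..<r}. card S = s \<and> (\<forall>u\<in>S. \<forall>v\<in>S. u \<noteq> v \<longrightarrow> c {u, v})) \<or>
      (\<exists>T\<subseteq>{..<r}. card T = t \<and> (\<forall>u\<in>T. \<forall>v\<in>T. u \<noteq> v \<longrightarrow> \<not> c {u, v}))"
      unfolding clique_def indep_def by blast
  qed
  thus ?thesis ..
qed

lemma ramsey_P: "rP s t (ramsey s t)"
  unfolding ramsey_eq by (rule LeastI_ex[OF rP_ex])

lemma ramsey_less: "n < ramsey s t \<Longrightarrow> \<not> rP s t n"
  unfolding ramsey_eq by (rule not_less_Least)

lemma rP_ge: assumes "rP s t n" shows "min s t \<le> n"
proof -
  from assms[unfolded rP_def, rule_format, of "\<lambda>_. True"]
  obtain S where "S \<subseteq> {..<n}" "card S = s \<or> card S = t" by blast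
  then have "card S \<le> n" by (metis card_lessThan card_mono finite_lessThan)
  with \<open>card S = s \<or> card S = t\<close> show ?thesis by auto
qed

lemma ramsey_diag_ge: "k \<le> ramsey k k"
  using rP_ge[OF ramsey_P[of k k]] by simp

lemma ramsey_1: "ramsey 1 t \<le> 1"
proof -
  have "rP 1 t 1" unfolding rP_def
    by (intro allI disjI1 exI[of _ "{0}"]) auto
  thus ?thesis unfolding ramsey_eq by (rule Least_le)
qed

lemma f_ratio_ge:
  assumes "is_graph n E"
  shows "real (chromatic_number n E) / real (clique_number n E) \<le> f_ratio n"
proof -
  have "{E. is_graph n E} \<subseteq> Pow (Pow {..<n})" by (auto simp: is_graph_def)
  then have fin: "finite {E. is_graph n E}" by (rule finite_subset) auto
  have eq: "{real (chromatic_number n E) / real (clique_number n E) | E. is_graph n E}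
     = (\<lambda>E. real (chromatic_number n E) / real (clique_number n E)) ` {E. is_graph n E}" by auto
  show ?thesis unfolding f_ratio_def eq
    by (rule Max_ge) (use fin assms in auto)
qed

lemma f_ratio_nonneg: "0 \<le> f_ratio n"
proof -
  have "is_graph n {}" by (simp add: is_graph_def)
  from f_ratio_ge[OF this] show ?thesis by (smt (verit) divide_nonneg_nonneg of_nat_0_le_iff)
qed

lemma g_nonneg: "0 \<le> g_fun n"
  unfolding g_fun_def using f_ratio_nonneg[of n] by simp



lemma f_ratio_lb:
  assumes s: "2 \<le> s" and t: "2 \<le> t" and n1: "1 \<le> n" and nR: "n < ramsey s t"
  shows "real n / (real (s-1) * real (t-1)) \<le> f_ratio n"
proof -
  from ramsey_less[OF nR] obtain c :: "nat set \<Rightarrow> bool" where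
    nored: "\<not> (\<exists>S\<subseteq>{..<n}. card S = s \<and> (\<forall>u\<in>S. \<forall>v\<in>S. u \<noteq> v \<longrightarrow> c {u, v}))" and
    noblue: "\<not> (\<exists>T\<subseteq>{..<n}. card T = t \<and> (\<forall>u\<in>T. \<forall>v\<in>T. u \<noteq> v \<longrightarrow> \<not> c {u, v}))"
    unfolding rP_def by blast
  define E where "E = {{u,v} | u v. u < n \<and> v < n \<and> u \<noteq> v \<and> c {u,v}}"
  have graph: "is_graph n E" unfolding is_graph_def E_def by auto
  have Emem: "c {u,v}" if "{u,v} \<in> E" for u v
  proof -
    from that obtain u' v' where "{u,v} = {u',v'}" "c {u',v'}" unfolding E_def by blast
    thus ?thesis by simp
  qed
  have Emem2: "{u,v} \<in> E" if "u<n" "v<n" "u\<noteq>v" "c{u,v}" for u v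
    using that unfolding E_def by blast
  have Eneq: "u \<noteq> v" if "{u,v} \<in> E" for u v
    using that unfolding E_def by (auto simp: doubleton_eq_iff)
  define CS where "CS = {card S | S. S \<subseteq> {..<n} \<and> is_clique E S}"
  have cl_small: "card S < s" if "S \<subseteq> {..<n}" "is_clique E S" for S
  proof (rule ccontr)
    assume "\<not> card S < s"
    then have "s \<le> card S" by simp
    moreover have "finite S" using that(1) finite_subset by blast
    ultimately obtain S' where "S' \<subseteq> S" "card S' = s" by (metis obtain_subset_with_card_n)
    moreover have "\<forall>u\<in>S'. \<forall>v\<in>S'. u \<noteq> v \<longrightarrow> c {u, v}"
      using that(2) \<open>S' \<subseteq> S\<close> Emem unfolding is_clique_def by blast
    ultimately show False using nored that(1) by blast
  qed
  have CSfin: "finite CS" unfolding CS_def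
    by (rule finite_subset[of _ "{..n}"]) (auto intro: card_mono[of "{..<n}", simplified])
  have "1 \<in> CS" unfolding CS_def
    by (rule CollectI, rule exI[of _ "{0}"]) (use n1 in \<open>auto simp: is_clique_def\<close>)
  then have om1: "1 \<le> clique_number n E" unfolding clique_number_def CS_def[symmetric]
    using CSfin by (rule Max_ge[rotated])
  have om2: "clique_number n E \<le> s - 1"
  proof -
    have "\<forall>x\<in>CS. x \<le> s-1" using cl_small unfolding CS_def by (auto simp: less_Suc_eq_le[symmetric]) (metis Suc_pred less_Suc_eq_le not_less0 gr0I)
    then have "Max CS \<le> s - 1" using CSfin \<open>1 \<in> CS\<close> by (subst Max_le_iff) auto
    thus ?thesis unfolding clique_number_def CS_def .
  qed
  define k where "k = chromatic_number n E"
  have "\<exists>c::nat \<Rightarrow> nat. (\<forall>v<n. c v < n) \<and> (\<forall>u v. {u, v} \<in> E \<longrightarrow> c u \<noteq> c v)"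
    by (rule exI[of _ id]) (auto dest: Eneq)
  then have "\<exists>c::nat \<Rightarrow> nat. (\<forall>v<n. c v < k) \<and> (\<forall>u v. {u, v} \<in> E \<longrightarrow> c u \<noteq> c v)"
    unfolding k_def chromatic_number_def
    by (rule LeastI[of "\<lambda>k. \<exists>c::nat \<Rightarrow> nat. (\<forall>v<n. c v < k) \<and> (\<forall>u v. {u, v} \<in> E \<longrightarrow> c u \<noteq> c v)" n])
  then obtain col :: "nat \<Rightarrow> nat" where col1: "\<forall>v<n. col v < k"
    and col2: "\<forall>u v. {u, v} \<in> E \<longrightarrow> col u \<noteq> col v" by blast
  define C where "C i = {v. v < n \<and> col v = i}" for i
  have Csmall: "card (C i) \<le> t - 1" for i
  proof (rule ccontr)
    assume "\<not> card (C i) \<le> t - 1"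
    then have "t \<le> card (C i)" by simp
    moreover have "finite (C i)" unfolding C_def by simp
    ultimately obtain T where T: "T \<subseteq> C i" "card T = t" by (metis obtain_subset_with_card_n)
    have "\<forall>u\<in>T. \<forall>v\<in>T. u \<noteq> v \<longrightarrow> \<not> c {u, v}"
    proof (intro ballI impI)
      fix u v assume "u \<in> T" "v \<in> T" "u \<noteq> v"
      then have "u < n" "v < n" "col u = col v" using T(1) unfolding C_def by auto
      then show "\<not> c {u,v}" using Emem2 col2 \<open>u \<noteq> v\<close> by blast
    qed
    moreover have "T \<subseteq> {..<n}" using T(1) unfolding C_def by auto
    ultimately show False using noblue T(2) by blast
  qed
  have "{..<n} \<subseteq> (\<Union>i<k. C i)" using col1 unfolding C_def by auto
  moreover have fin: "finite (\<Union>i<k. C i)" unfolding C_def by auto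
  ultimately have "card {..<n} \<le> card (\<Union>i<k. C i)" by (intro card_mono)
  then have "n \<le> card (\<Union>i<k. C i)" by simp
  also have "\<dots> \<le> (\<Sum>i<k. card (C i))" by (rule card_UN_le) simp
  also have "\<dots> \<le> k * (t - 1)" using sum_bounded_above[of "{..<k}" "\<lambda>i. card (C i)" "t-1"] Csmall by simp
  finally have nk: "n \<le> k * (t - 1)" .
  have "real n / (real (s-1) * real (t-1)) = (real n / real (t-1)) / real (s-1)" by simp
  also have "\<dots> \<le> real k / real (s-1)"
  proof (rule divide_right_mono)
    have "real n \<le> real k * real (t-1)" using nk by (metis of_nat_le_iff of_nat_mult)
    moreover have "0 < real (t-1)" using t by simp
    ultimately show "real n / real (t-1) \<le> real k" by (simp add: pos_divide_le_eq)
  qed simp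
  also have "\<dots> \<le> real k / real (clique_number n E)"
    using om1 om2 by (intro divide_left_mono) auto
  also have "\<dots> \<le> f_ratio n" unfolding k_def by (rule f_ratio_ge[OF graph])
  finally show ?thesis .
qed

lemma g_lb:
  assumes s: "2 \<le> s" and t: "2 \<le> t" and n1: "1 \<le> n" and nR: "n < ramsey s t"
  shows "(log 2 (real n))\<^sup>2 / (real (s-1) * real (t-1)) \<le> g_fun n"
proof -
  have "(log 2 (real n))\<^sup>2 / (real (s-1) * real (t-1)) = (log 2 (real n))\<^sup>2 / real n * (real n / (real (s-1) * real (t-1)))"
    using n1 by (simp add: field_simps)
  also have "\<dots> \<le> (log 2 (real n))\<^sup>2 / real n * f_ratio n"
    by (rule mult_left_mono[OF f_ratio_lb[OF assms]]) simp
  finally show ?thesis unfolding g_fun_def .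
qed



lemma log_nat_nonneg: "0 \<le> log 2 (real (m::nat))"
  by (cases "m = 0") (auto simp: log_def)

lemma partA:
  assumes a0: "0 \<le> a" and aL: "ereal a < L_const"
  shows "eventually (\<lambda>n. a^2 < g_fun n) sequentially"
proof -
  have "eventually (\<lambda>k. ereal a < ereal (log 2 (real (ramsey k k)) / real k)) sequentially"
    using less_LiminfD[OF aL[unfolded L_const_def]] .
  then obtain K1 where K1: "\<And>k. k \<ge> K1 \<Longrightarrow> a < log 2 (real (ramsey k k)) / real k"
    unfolding eventually_sequentially by auto
  define K0 where "K0 = max K1 2"
  define N where "N = (\<Sum>k\<le>K0. ramsey k k) + 1"
  have "a^2 < g_fun n" if nN: "n \<ge> N" for n
  proof -
    define k where "k = (LEAST k. n < ramsey k k)"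
    have ex: "n < ramsey (n+1) (n+1)" using ramsey_diag_ge[of "n+1"] by simp
    have nk: "n < ramsey k k" unfolding k_def by (rule LeastI[of "\<lambda>k. n < ramsey k k", OF ex])
    have kK: "k > K0"
    proof (rule ccontr)
      assume "\<not> K0 < k"
      then have "ramsey k k \<le> (\<Sum>k\<le>K0. ramsey k k)"
        by (intro member_le_sum) auto
      then show False using nk nN unfolding N_def by simp
    qed
    define j where "j = k - 1"
    have jk: "j < k" "k = j + 1" using kK unfolding j_def by auto
    have jn: "\<not> n < ramsey j j" unfolding k_def using jk(1)[unfolded k_def] by (rule not_less_Least)
    have jK: "j \<ge> K1" "j \<ge> 2" using kK unfolding j_def K0_def by auto
    have aj: "a < log 2 (real (ramsey j j)) / real j" using K1[OF jK(1)] .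
    have Rpos: "ramsey j j > 0"
    proof (rule ccontr)
      assume "\<not> 0 < ramsey j j" then have "ramsey j j = 0" by simp
      then show False using aj a0 by (simp add: log_def)
    qed
    have n1: "1 \<le> n" using Rpos jn by simp
    have "a * real j < log 2 (real (ramsey j j))" using aj jK by (simp add: field_simps)
    also have "\<dots> \<le> log 2 (real n)" using Rpos jn by simp
    finally have ajn: "a * real j < log 2 (real n)" .
    have "(a * real j)^2 < (log 2 (real n))^2"
      using ajn a0 by (intro power_strict_mono) auto
    then have "a^2 < (log 2 (real n))^2 / (real j * real j)"
      using jK by (simp add: field_simps power2_eq_square)
    also have "\<dots> = (log 2 (real n))\<^sup>2 / (real (k-1) * real (k-1))" using jk by simp
    also have "\<dots> \<le> g_fun n" using g_lb[of k k n] kK jK nk n1 jk by simp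
    finally show ?thesis .
  qed
  then show ?thesis unfolding eventually_sequentially by blast
qed



definition mfun :: "nat \<Rightarrow> real" where
  "mfun t = Max ((\<lambda>s. log 2 (real (ramsey s t)) / sqrt (real s * real t)) ` {1..t})"

lemma M_eq: "M_const = limsup (\<lambda>t. ereal (mfun t))"
  unfolding M_const_def mfun_def ..

lemma partB:
  assumes b0: "0 \<le> b" and ba: "b < a" and aM: "ereal a < M_const"
  shows "\<exists>n\<ge>N. b^2 < g_fun n"
proof -
  have a0: "0 < a" using b0 ba by simp
  have freq: "frequently (\<lambda>t. a < mfun t) sequentially"
  proof (rule ccontr)
    assume "\<not> ?thesis"
    then have "eventually (\<lambda>t. ereal (mfun t) \<le> ereal a) sequentially"
      unfolding not_frequently by (auto elim: eventually_mono)
    then have "M_const \<le> ereal a" unfolding M_eq by (rule Limsup_bounded)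
    then show False using aM by simp
  qed
  define T where "T = 2 + nat \<lceil>(1/(a-b))^2\<rceil> + nat \<lceil>(log 2 (real N + 2) / a)^2\<rceil>"
  obtain t where tT: "t \<ge> T" and at: "a < mfun t"
    using freq unfolding frequently_sequentially by blast
  have t2: "t \<ge> 2" using tT unfolding T_def by simp
  have "sqrt ((1/(a-b))^2) \<le> sqrt (real t)"
    using tT unfolding T_def by (intro real_sqrt_le_mono) linarith
  then have st1: "1/(a-b) \<le> sqrt (real t)" using ba by simp
  have "sqrt ((log 2 (real N + 2) / a)^2) \<le> sqrt (real t)"
    using tT unfolding T_def by (intro real_sqrt_le_mono) linarith
  then have st2: "log 2 (real N + 2) / a \<le> sqrt (real t)"
    by (metis abs_le_D1 real_sqrt_abs)
  have "a < Max ((\<lambda>s. log 2 (real (ramsey s t)) / sqrt (real s * real t)) ` {1..t})"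
    using at unfolding mfun_def .
  then obtain s where s: "s \<in> {1..t}" and as: "a < log 2 (real (ramsey s t)) / sqrt (real s * real t)"
    using t2 by (subst (asm) Max_gr_iff) auto
  define R where "R = ramsey s t"
  have sq: "sqrt (real s * real t) > 0" using s t2 by simp
  have sqt: "sqrt (real t) \<le> sqrt (real s * real t)" using s by (intro real_sqrt_le_mono) auto
  have aR: "a * sqrt (real s * real t) < log 2 (real R)"
    using as sq unfolding R_def by (simp add: field_simps)
  have "log 2 (real N + 2) \<le> a * sqrt (real t)" using st2 a0 by (simp add: field_simps)
  also have "\<dots> \<le> a * sqrt (real s * real t)" using sqt a0 by simp
  finally have logNR: "log 2 (real N + 2) < log 2 (real R)" using aR by linarith
  have Rpos: "R > 0"
  proof (rule ccontr)
    assume "\<not> R > 0" then have "R = 0" by simp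
    moreover have "0 < log 2 (real N + 2)" by simp
    moreover have "log 2 (real R) = 0" using \<open>R = 0\<close> by (simp add: log_def)
    ultimately show False using logNR by linarith
  qed
  have RN: "real N + 2 < real R" using logNR Rpos by simp
  have s2: "s \<ge> 2"
  proof (rule ccontr)
    assume "\<not> s \<ge> 2" then have "s = 1" using s by simp
    then have "R \<le> 1" unfolding R_def using ramsey_1 by simp
    then show False using RN by simp
  qed
  define n where "n = R - 1"
  have nR: "n < ramsey s t" "n \<ge> N" "n \<ge> 1" using Rpos RN unfolding n_def R_def by auto
  have rn: "real n = real R - 1" using Rpos unfolding n_def by simp
  have "log 2 (real R / 2) \<le> log 2 (real n)" using RN rn by simp
  then have logn: "log 2 (real R) - 1 \<le> log 2 (real n)" using Rpos by (simp add: log_divide)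
  have "1 \<le> (a - b) * sqrt (real t)" using st1 ba by (simp add: field_simps)
  also have "\<dots> \<le> (a - b) * sqrt (real s * real t)" using sqt ba by simp
  finally have "b * sqrt (real s * real t) < log 2 (real n)" using aR logn by (simp add: algebra_simps)
  then have "(b * sqrt (real s * real t))^2 < (log 2 (real n))^2"
    using b0 by (intro power_strict_mono) auto
  then have "b^2 * (real s * real t) < (log 2 (real n))^2"
    by (simp add: power_mult_distrib)
  then have "b^2 < (log 2 (real n))^2 / (real s * real t)"
    using sq by (simp add: field_simps)
  also have "\<dots> \<le> (log 2 (real n))^2 / (real (s-1) * real (t-1))"
    using s2 t2 by (intro divide_left_mono mult_mono) auto
  also have "\<dots> \<le> g_fun n" using g_lb[of s t n] s2 t2 nR by simp
  finally show ?thesis using nR by blast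
qed



lemma split_sq:
  fixes X y :: ereal
  assumes X0: "0 \<le> X" and y0: "0 \<le> y" and yX: "y < X^2"
  shows "\<exists>a b. 0 \<le> b \<and> b < a \<and> ereal a < X \<and> y < ereal (b^2)"
proof -
  obtain y' where y': "y = ereal y'" "0 \<le> y'" using y0 yX
    by (cases y) (auto simp: power2_eq_square)
  show ?thesis
  proof (cases X)
    case (real x)
    then have "y' < x^2" using yX y' by (simp add: power2_eq_square)
    then have "sqrt y' < sqrt (x^2)" by (rule real_sqrt_less_mono)
    then have sx: "sqrt y' < x" using X0 real by simp
    define b where "b = (2 * sqrt y' + x) / 3"
    define a where "a = (sqrt y' + 2 * x) / 3"
    have "sqrt y' < b" using sx unfolding b_def by simp
    then have "(sqrt y')^2 < b^2" using y' by (intro power_strict_mono) auto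
    then have "y' < b^2" using y' by simp
    moreover have "0 \<le> b" "b < a" "a < x" using sx y'(2) unfolding a_def b_def
      by (auto intro: add_nonneg_nonneg order.strict_implies_order[OF le_less_trans[OF real_sqrt_ge_zero sx]])
    ultimately show ?thesis using real y' by (intro exI[of _ a] exI[of _ b]) auto
  next
    case PInf
    define b where "b = sqrt y' + 1"
    have "sqrt y' < b" unfolding b_def by simp
    then have "(sqrt y')^2 < b^2" using y' by (intro power_strict_mono) auto
    then have "y' < b^2" using y' by simp
    then show ?thesis using PInf y' unfolding b_def
      by (intro exI[of _ "sqrt y' + 2"] exI[of _ "sqrt y' + 1"]) auto
  next
    case MInf
    then show ?thesis using X0 by simp
  qed
qed

lemma L_nonneg: "0 \<le> L_const"
  unfolding L_const_def
  by (rule Liminf_bounded, rule always_eventually) (auto intro!: divide_nonneg_nonneg log_nat_nonneg)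

lemma M_nonneg: "0 \<le> M_const"
  unfolding M_eq
proof (rule le_Limsup)
  show "\<forall>\<^sub>F x in sequentially. 0 \<le> ereal (mfun x)"
    unfolding eventually_sequentially
  proof (intro exI allI impI)
    fix t :: nat assume "1 \<le> t"
    have "0 \<le> log 2 (real (ramsey 1 t)) / sqrt (real 1 * real t)"
      by (intro divide_nonneg_nonneg log_nat_nonneg) auto
    also have "\<dots> \<le> mfun t" unfolding mfun_def using \<open>1 \<le> t\<close>
      by (intro Max_ge) (auto intro!: image_eqI[of _ _ 1])
    finally show "0 \<le> ereal (mfun t)" by simp
  qed
qed simp

theorem theorem2p1:
  shows "liminf (\<lambda>n. ereal (g_fun n)) \<ge> L_const ^ 2 \<and>
         limsup (\<lambda>n. ereal (g_fun n)) \<ge> M_const ^ 2"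
proof
  show "liminf (\<lambda>n. ereal (g_fun n)) \<ge> L_const ^ 2"
    unfolding le_Liminf_iff
  proof (intro allI impI)
    fix y assume y: "y < L_const ^ 2"
    show "\<forall>\<^sub>F x in sequentially. y < ereal (g_fun x)"
    proof (cases "y < 0")
      case True
      then show ?thesis using g_nonneg by (intro always_eventually) (auto intro: less_le_trans)
    next
      case False
      then have "0 \<le> y" by simp
      then obtain a b where ab: "0 \<le> b" "b < a" "ereal a < L_const" "y < ereal (b^2)"
        using split_sq[OF L_nonneg _ y] by blast
      have "ereal b < L_const" using ab by (meson ereal_less_eq(3) le_less_trans less_imp_le)
      from partA[OF ab(1) this] show ?thesis
        by (rule eventually_mono) (use ab(4) in \<open>auto intro: less_trans\<close>)
    qed
  qed
next
  show "limsup (\<lambda>n. ereal (g_fun n)) \<ge> M_const ^ 2"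
  proof (rule ccontr)
    assume "\<not> ?thesis"
    then have "limsup (\<lambda>n. ereal (g_fun n)) < M_const ^ 2" by simp
    then obtain y where y1: "limsup (\<lambda>n. ereal (g_fun n)) < y" and y2: "y < M_const ^ 2"
      using dense by blast
    have "0 \<le> limsup (\<lambda>n. ereal (g_fun n))"
      by (rule le_Limsup) (auto simp: g_nonneg)
    then have y0: "0 \<le> y" using y1 by simp
    obtain a b where ab: "0 \<le> b" "b < a" "ereal a < M_const" "y < ereal (b^2)"
      using split_sq[OF M_nonneg y0 y2] by auto
    have ev: "eventually (\<lambda>n. ereal (g_fun n) < y) sequentially"
      using Limsup_lessD[OF y1] .
    then obtain N where N: "\<And>n. n \<ge> N \<Longrightarrow> ereal (g_fun n) < y"
      unfolding eventually_sequentially by auto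
    obtain n where n: "n \<ge> N" "b^2 < g_fun n" using partB[OF ab(1-3)] by blast
    then have "ereal (b^2) < ereal (g_fun n)" by simp
    with ab(4) have "y < ereal (g_fun n)" by (rule less_trans)
    then show False using N[OF n(1)] by simp
  qed
qed


end
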